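(* Let $a(s),b(s)\in\mathbb{C}[s]$ be two nonzero polynomials, and let $(a\bullet b)(s)\in\mathbb{C}[s]$ be the monic polynomial such that $$\langle a(s),b(t)\rangle\cap\mathbb{C}[s+t]=\langle (a\bullet b)(s+t)\rangle,$$ where $\langle a(s),b(t)\rangle$ is the ideal generated by $a(s)$ and $b(t)$ in $\mathbb{C}[s,t]$, and the intersection is an ideal of the subring $\mathbb{C}[s+t]\subseteq\mathbb{C}[s,t]$. Then $a\bullet b=a*b$.
   Context: For a polynomial $p(s)\in\mathbb{C}[s]$, let $R_p\subseteq\mathbb{C}$ denote the set of the opposites of its roots (i.e. $\alpha\in R_p$ iff $p(-\alpha)=0$). For $\alpha\in R_p$, $m_\alpha(p)$ denotes the multiplicity of $-\alpha$ as a root of $p$. For nonzero $a,b\in\mathbb{C}[s]$, the star operation $a*b\in\mathbb{C}[s]$ is the monic polynomial with $R_{a*b}=R_a+R_b=\{\alpha+\beta:\alpha\in R_a,\beta\in R_b\}$ (with the convention that the sum of the empty set with any set is empty, so $a*b=1$ if $a$ or $b$ is constant) and, for every $\gamma\in R_{a*b}$, multiplicity $m_\gamma(a*b)=\max\{m_\alpha(a)+m_\beta(b)-1:\alpha\in R_a,\beta\in R_b,\ \alpha+\beta=\gamma\}$. *)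

theory Defs
  imports "HOL-Computational_Algebra.Polynomial"
begin

text \<open>Bivariate polynomials in s,t are represented as complex poly poly:
  the outer variable is s, the coefficients are polynomials in t.\<close>

definition Rset :: "complex poly \<Rightarrow> complex set" where
  "Rset p = {\<alpha>. poly p (- \<alpha>) = 0}"

definition mult_at :: "complex \<Rightarrow> complex poly \<Rightarrow> nat" where
  "mult_at \<alpha> p = order (- \<alpha>) p"

definition star :: "complex poly \<Rightarrow> complex poly \<Rightarrow> complex poly" where
  "star a b = (\<Prod>\<gamma> \<in> {\<alpha> + \<beta> | \<alpha> \<beta>. \<alpha> \<in> Rset a \<and> \<beta> \<in> Rset b}.
      [:\<gamma>, 1:] ^ Max {mult_at \<alpha> a + mult_at \<beta> b - 1 | \<alpha> \<beta>.
                          \<alpha> \<in> Rset a \<and> \<beta> \<in> Rset b \<and> \<alpha> + \<beta> = \<gamma>})"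

definition in_s :: "complex poly \<Rightarrow> complex poly poly" where
  "in_s p = map_poly (\<lambda>c. [:c:]) p"

definition in_t :: "complex poly \<Rightarrow> complex poly poly" where
  "in_t p = [:p:]"

text \<open>p(s+t).\<close>
definition in_sum :: "complex poly \<Rightarrow> complex poly poly" where
  "in_sum p = pcompose (in_s p) [:[:0, 1:], 1:]"

definition ideal_st :: "complex poly \<Rightarrow> complex poly \<Rightarrow> complex poly poly set" where
  "ideal_st a b = {f * in_s a + g * in_t b | f g. True}"

definition sum_ring :: "complex poly poly set" where
  "sum_ring = range in_sum"

definition princ_sum :: "complex poly \<Rightarrow> complex poly poly set" where
  "princ_sum c = {r * in_sum c | r. r \<in> sum_ring}"

definition is_bullet :: "complex poly \<Rightarrow> complex poly \<Rightarrow> complex poly \<Rightarrow> bool" where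
  "is_bullet a b c \<longleftrightarrow> lead_coeff c = 1 \<and> ideal_st a b \<inter> sum_ring = princ_sum c"

end

theory Submission imports Defs "HOL-Computational_Algebra.Computational_Algebra" "HOL-Computational_Algebra.Field_as_Ring" begin

lemma coeff_in_s [simp]: "coeff (in_s p) i = [:coeff p i:]"
  unfolding in_s_def by (simp add: coeff_map_poly)

lemma in_s_add [simp]: "in_s (p + q) = in_s p + in_s q"
  by (rule poly_eqI) simp

lemma in_s_0 [simp]: "in_s 0 = 0" by (rule poly_eqI) simp

lemma in_s_pCons [simp]: "in_s (pCons c p) = pCons [:c:] (in_s p)"
  by (rule poly_eqI) (simp add: coeff_pCons split: nat.splits)

lemma in_s_smult [simp]: "in_s (smult c p) = smult [:c:] (in_s p)"
  by (rule poly_eqI) simp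

lemma in_s_mult [simp]: "in_s (p * q) = in_s p * in_s q"
  by (induction p) (simp_all add: algebra_simps)

lemma in_s_1 [simp]: "in_s 1 = 1" by (rule poly_eqI) (simp add: coeff_1)

lemma in_s_power [simp]: "in_s (p ^ n) = in_s p ^ n"
  by (induction n) simp_all

lemma in_s_const [simp]: "in_s [:c:] = [:[:c:]:]"
  by (rule poly_eqI) (simp add: coeff_pCons split: nat.splits)

lemma pderiv_in_s: "pderiv (in_s p) = in_s (pderiv p)"
  by (induction p) (simp_all add: pderiv_pCons)

lemma in_s_eq0 [simp]: "in_s p = 0 \<longleftrightarrow> p = 0"
proof
  assume "in_s p = 0"
  then have "[:coeff p n:] = 0" for n by (metis coeff_in_s coeff_0)
  then show "p = 0" by (intro poly_eqI) simp
next
  assume "p = 0" then show "in_s p = 0" by simp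
qed

definition QQ :: "complex poly poly" where "QQ = [:[:0, 1:], 1:]"

lemma in_sum_alt: "in_sum p = pcompose (in_s p) QQ"
  by (simp add: in_sum_def QQ_def)

lemma in_sum_add [simp]: "in_sum (p + q) = in_sum p + in_sum q"
  by (simp add: in_sum_alt pcompose_add)
lemma in_sum_mult [simp]: "in_sum (p * q) = in_sum p * in_sum q"
  by (simp add: in_sum_alt pcompose_mult)
lemma in_sum_1 [simp]: "in_sum 1 = 1"
  by (simp add: in_sum_alt pcompose_1)
lemma in_sum_power [simp]: "in_sum (p ^ n) = in_sum p ^ n"
  by (induction n) simp_all

lemma pderiv_in_sum: "pderiv (in_sum p) = in_sum (pderiv p)"
  by (simp add: in_sum_alt pderiv_pcompose pderiv_in_s QQ_def pderiv_pCons)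

lemma in_sum_eq0 [simp]: "in_sum p = 0 \<longleftrightarrow> p = 0"
  by (simp add: in_sum_alt pcompose_eq_0_iff QQ_def)

lemma in_sum_inj: "in_sum p = in_sum q \<Longrightarrow> p = q"
proof -
  assume "in_sum p = in_sum q"
  moreover have "in_sum (p - q) + in_sum q = in_sum p"
    by (simp only: in_sum_add[symmetric] diff_add_cancel)
  ultimately have "in_sum (p - q) = 0" by simp
  then show ?thesis by simp
qed

lemma in_sum_lin: "in_sum [:\<alpha> + \<beta>, 1:] = in_s [:\<alpha>, 1:] + in_t [:\<beta>, 1:]"
proof -
  have "in_s [:\<alpha> + \<beta>, 1:] = pCons [:\<alpha> + \<beta>:] 1" by (simp add: one_pCons)
  then have "in_sum [:\<alpha> + \<beta>, 1:] = [:[:\<alpha> + \<beta>:]:] + QQ"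
    by (simp add: in_sum_alt pcompose_pCons pcompose_1)
  also have "\<dots> = in_s [:\<alpha>, 1:] + in_t [:\<beta>, 1:]"
    by (simp add: QQ_def in_t_def one_pCons)
  finally show ?thesis .
qed

lemma in_t_mult [simp]: "in_t (p * q) = in_t p * in_t q"
  by (simp add: in_t_def)
lemma in_t_power [simp]: "in_t (p ^ n) = in_t p ^ n"
  by (simp add: in_t_def poly_const_pow)

lemma poly_in_sum: "poly (in_sum p) [:c:] = pcompose p [:c, 1:]"
proof -
  have "poly QQ [:c:] = [:c, 1:]" by (simp add: QQ_def)
  then have "poly (in_sum p) [:c:] = poly (in_s p) [:c, 1:]"
    by (simp only: in_sum_alt poly_pcompose)
  also have "\<dots> = pcompose p [:c, 1:]" by (simp add: pcompose_altdef in_s_def)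
  finally show ?thesis .
qed

lemma poly_in_s: "poly (in_s p) [:c:] = [:poly p c:]"
  by (induction p) (simp_all)

lemma poly_in_t: "poly (in_t p) x = p"
  by (simp add: in_t_def)

lemma ideal_memI: "F = f * in_s a + g * in_t b \<Longrightarrow> F \<in> ideal_st a b"
  unfolding ideal_st_def by blast

lemma ideal_memE:
  assumes "F \<in> ideal_st a b"
  obtains f g where "F = f * in_s a + g * in_t b"
  using assms unfolding ideal_st_def by blast

lemma ideal_add: "F \<in> ideal_st a b \<Longrightarrow> G \<in> ideal_st a b \<Longrightarrow> F + G \<in> ideal_st a b"
proof -
  assume "F \<in> ideal_st a b" "G \<in> ideal_st a b"
  then obtain f g f' g' where "F = f * in_s a + g * in_t b" "G = f' * in_s a + g' * in_t b"
    by (metis ideal_memE)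
  then have "F + G = (f + f') * in_s a + (g + g') * in_t b" by (simp add: algebra_simps)
  then show ?thesis by (rule ideal_memI)
qed

lemma ideal_mult: "F \<in> ideal_st a b \<Longrightarrow> H * F \<in> ideal_st a b"
proof -
  assume "F \<in> ideal_st a b"
  then obtain f g where "F = f * in_s a + g * in_t b"
    by (metis ideal_memE)
  then have "H * F = (H * f) * in_s a + (H * g) * in_t b" by (simp add: algebra_simps)
  then show ?thesis by (rule ideal_memI)
qed

lemma ideal_gen_s: "H * in_s a \<in> ideal_st a b"
  by (rule ideal_memI[of _ H _ 0]) simp

lemma ideal_gen_t: "H * in_t b \<in> ideal_st a b"
  by (rule ideal_memI[where f=0 and g=H]) simp

lemma ideal_zero: "0 \<in> ideal_st a b"
  by (rule ideal_memI[where f=0 and g=0]) simp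

lemma ideal_sum: "finite A \<Longrightarrow> (\<And>k. k \<in> A \<Longrightarrow> h k \<in> ideal_st a b) \<Longrightarrow> sum h A \<in> ideal_st a b"
  by (induction A rule: finite_induct) (auto intro: ideal_add ideal_zero)

lemma ideal_mono:
  assumes "A' dvd A" "B' dvd B" "F \<in> ideal_st A B"
  shows "F \<in> ideal_st A' B'"
proof -
  obtain f g where F: "F = f * in_s A + g * in_t B" using assms(3) by (metis ideal_memE)
  obtain k where k: "A = A' * k" using assms(1) by blast
  obtain l where l: "B = B' * l" using assms(2) by blast
  have "F = (f * in_s k) * in_s A' + (g * in_t l) * in_t B'"
    unfolding F k l by (simp add: algebra_simps)
  then show ?thesis by (rule ideal_memI)
qed

lemma ideal_unit_s: "c \<noteq> 0 \<Longrightarrow> F \<in> ideal_st [:c:] B"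
proof -
  assume c: "c \<noteq> 0"
  have "F = (F * [:[:1 / c:]:]) * in_s [:c:] + 0 * in_t B"
    using c by (simp flip: mult.assoc one_pCons)
  then show ?thesis by (rule ideal_memI)
qed

lemma ideal_unit_t: "c \<noteq> 0 \<Longrightarrow> F \<in> ideal_st A [:c:]"
proof -
  assume c: "c \<noteq> 0"
  have "F = 0 * in_s A + (F * [:[:1 / c:]:]) * in_t [:c:]"
    using c by (simp add: in_t_def flip: mult.assoc one_pCons)
  then show ?thesis by (rule ideal_memI)
qed

lemma ideal_s_mult: "G \<in> ideal_st A2 B \<Longrightarrow> in_s A1 * G \<in> ideal_st (A1 * A2) B"
proof -
  assume "G \<in> ideal_st A2 B"
  then obtain f g where "G = f * in_s A2 + g * in_t B" by (metis ideal_memE)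
  then have "in_s A1 * G = f * in_s (A1 * A2) + (in_s A1 * g) * in_t B" by (simp add: algebra_simps)
  then show ?thesis by (rule ideal_memI)
qed

lemma ideal_t_mult: "G \<in> ideal_st A B2 \<Longrightarrow> in_t B1 * G \<in> ideal_st A (B1 * B2)"
proof -
  assume "G \<in> ideal_st A B2"
  then obtain f g where "G = f * in_s A + g * in_t B2" by (metis ideal_memE)
  then have "in_t B1 * G = (in_t B1 * f) * in_s A + g * in_t (B1 * B2)" by (simp add: algebra_simps)
  then show ?thesis by (rule ideal_memI)
qed

lemma bezout_poly:
  fixes A1 A2 :: "complex poly"
  assumes "coprime A1 A2"
  obtains u v where "u * A1 + v * A2 = 1"
  using bezout_coefficients_fst_snd[of A1 A2] coprime_imp_gcd_eq_1[OF assms] by metis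

lemma comb_s:
  assumes "coprime A1 A2" "F \<in> ideal_st A1 B" "F \<in> ideal_st A2 B"
  shows "F \<in> ideal_st (A1 * A2) B"
proof -
  obtain u v where uv: "u * A1 + v * A2 = 1" using bezout_poly[OF assms(1)] by blast
  have "F = in_s (u * A1 + v * A2) * F" using uv by simp
  also have "\<dots> = in_s u * (in_s A1 * F) + in_s v * (in_s A2 * F)" by (simp add: algebra_simps)
  finally have F: "F = in_s u * (in_s A1 * F) + in_s v * (in_s A2 * F)" .
  have 1: "in_s A1 * F \<in> ideal_st (A1 * A2) B" by (rule ideal_s_mult[OF assms(3)])
  have 2: "in_s A2 * F \<in> ideal_st (A1 * A2) B"
    using ideal_s_mult[OF assms(2), of A2] by (simp add: mult.commute)
  show ?thesis by (subst F) (intro ideal_add ideal_mult 1 2)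
qed

lemma comb_t:
  assumes "coprime B1 B2" "F \<in> ideal_st A B1" "F \<in> ideal_st A B2"
  shows "F \<in> ideal_st A (B1 * B2)"
proof -
  obtain u v where uv: "u * B1 + v * B2 = 1" using bezout_poly[OF assms(1)] by blast
  have "F = in_t (u * B1 + v * B2) * F" using uv by (simp add: in_t_def)
  also have "\<dots> = in_t u * (in_t B1 * F) + in_t v * (in_t B2 * F)"
    by (simp add: in_t_def algebra_simps smult_add_left)
  finally have F: "F = in_t u * (in_t B1 * F) + in_t v * (in_t B2 * F)" .
  have 1: "in_t B1 * F \<in> ideal_st A (B1 * B2)" by (rule ideal_t_mult[OF assms(3)])
  have 2: "in_t B2 * F \<in> ideal_st A (B1 * B2)"
    using ideal_t_mult[OF assms(2), of B2] by (simp add: mult.commute)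
  show ?thesis by (subst F) (intro ideal_add ideal_mult 1 2)
qed

lemma pcompose_power_left: "pcompose (p ^ n) q = pcompose p q ^ n"
  by (induction n) (simp_all add: pcompose_mult pcompose_1)

lemma pcompose_dvd: "p dvd q \<Longrightarrow> pcompose p r dvd pcompose q r"
  by (auto simp: dvd_def pcompose_mult)

lemma loc_base:
  assumes "in_sum p \<in> ideal_st [:\<alpha>, 1:] B"
  shows "pcompose B [:\<alpha>, 1:] dvd p"
proof -
  obtain f g where F: "in_sum p = f * in_s [:\<alpha>, 1:] + g * in_t B"
    using assms by (metis ideal_memE)
  have "poly (in_sum p) [:-\<alpha>:] = poly g [:-\<alpha>:] * B"
    unfolding F by (simp add: poly_in_s poly_in_t)
  then have "pcompose p [:-\<alpha>, 1:] = B * poly g [:-\<alpha>:]"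
    by (simp add: poly_in_sum mult.commute)
  then have "B dvd pcompose p [:-\<alpha>, 1:]" by (metis dvd_triv_left)
  then have "pcompose B [:\<alpha>, 1:] dvd pcompose (pcompose p [:-\<alpha>, 1:]) [:\<alpha>, 1:]"
    by (rule pcompose_dvd)
  also have "pcompose (pcompose p [:-\<alpha>, 1:]) [:\<alpha>, 1:] = pcompose p (pcompose [:-\<alpha>, 1:] [:\<alpha>, 1:])"
    by (simp add: pcompose_assoc)
  also have "pcompose [:-\<alpha>, 1:] [:\<alpha>, 1:] = [:0, 1:]"
    by (simp add: pcompose_pCons one_pCons)
  finally show ?thesis by simp
qed

lemma lin_compose: "pcompose ([:\<beta>, 1:] ^ n) [:\<alpha>, 1:] = [:\<alpha> + \<beta>, 1:] ^ n"
  by (simp add: pcompose_power_left pcompose_pCons one_pCons add.commute)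

lemma loc_nec:
  assumes "1 \<le> m" "1 \<le> n" "in_sum p \<in> ideal_st ([:\<alpha>, 1:] ^ m) ([:\<beta>, 1:] ^ n)"
  shows "[:\<alpha> + \<beta>, 1:] ^ (m + n - 1) dvd p"
  using assms
proof (induction m arbitrary: p)
  case 0
  then show ?case by simp
next
  case (Suc m)
  show ?case
  proof (cases "m = 0")
    case True
    then have "in_sum p \<in> ideal_st [:\<alpha>, 1:] ([:\<beta>, 1:] ^ n)" using Suc.prems by simp
    from loc_base[OF this] True show ?thesis by (simp add: lin_compose)
  next
    case False
    define L where "L = [:\<alpha>, 1:]"
    define B where "B = [:\<beta>, 1:] ^ n"
    obtain f g where F: "in_sum p = f * in_s (L ^ Suc m) + g * in_t B"
      using Suc.prems(3) unfolding L_def B_def by (metis ideal_memE)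
    have dL: "pderiv L = 1" by (simp add: L_def pderiv_pCons)
    define c where "c = (of_nat (Suc m) :: complex)"
    have d1: "pderiv (in_s (L ^ Suc m)) = in_s (smult c (L ^ m))"
      by (simp only: pderiv_in_s pderiv_power_Suc dL mult_1_right c_def)
    have d2: "pderiv (in_t B) = 0" by (simp add: in_t_def)
    have "in_sum (pderiv p) = pderiv (in_sum p)" by (simp add: pderiv_in_sum)
    also have "\<dots> = f * in_s (smult c (L ^ m)) + in_s (L ^ Suc m) * pderiv f + in_t B * pderiv g"
      unfolding F by (simp only: pderiv_add pderiv_mult d1 d2 mult_zero_right add_0)
    finally have E: "in_sum (pderiv p) = f * in_s (smult c (L ^ m)) + in_s (L ^ Suc m) * pderiv f + in_t B * pderiv g" .
    have "in_s (smult c (L ^ m)) = [:[:c:]:] * in_s (L ^ m)"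
      by (simp del: in_s_power in_s_mult)
    then have m1: "f * in_s (smult c (L ^ m)) \<in> ideal_st (L ^ m) B"
      by (simp only: ideal_mult ideal_gen_s)
    have "in_s (L ^ Suc m) * pderiv f = (in_s L * pderiv f) * in_s (L ^ m)"
      by (simp only: power_Suc in_s_mult mult_ac)
    then have m2: "in_s (L ^ Suc m) * pderiv f \<in> ideal_st (L ^ m) B"
      by (simp only: ideal_gen_s)
    have m3: "in_t B * pderiv g \<in> ideal_st (L ^ m) B"
      by (simp only: mult.commute[of "in_t B"] ideal_gen_t)
    have "in_sum (pderiv p) \<in> ideal_st (L ^ m) B"
      unfolding E by (intro ideal_add m1 m2 m3)
    then have IH: "[:\<alpha> + \<beta>, 1:] ^ (m + n - 1) dvd pderiv p"
      using Suc.IH[of "pderiv p"] False Suc.prems(2) unfolding L_def B_def by simp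
    have "L dvd L ^ Suc m" by simp
    then have "in_sum p \<in> ideal_st L B"
      using ideal_mono[OF _ dvd_refl Suc.prems(3)[folded L_def B_def]] by blast
    from loc_base[OF this[unfolded L_def]] have "[:\<alpha> + \<beta>, 1:] ^ n dvd p"
      by (simp add: lin_compose B_def)
    then have "[:\<alpha> + \<beta>, 1:] dvd p"
      using Suc.prems(2) by (metis dvd_power dvd_trans le_zero_eq not_one_le_zero neq0_conv)
    then have root: "poly p (-(\<alpha> + \<beta>)) = 0" by (simp only: poly_eq_0_iff_dvd minus_minus)
    show ?thesis
    proof (cases "p = 0")
      case True then show ?thesis by simp
    next
      case pn0: False
      have "pderiv p \<noteq> 0"
      proof
        assume "pderiv p = 0"
        then have "degree p = 0" by (simp add: pderiv_eq_0_iff)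
        then have "p = [:coeff p 0:]" by (metis degree_0_id)
        with root pn0 show False by (metis poly_const_conv pCons_eq_0_iff)
      qed
      with IH have "m + n - 1 \<le> order (-(\<alpha> + \<beta>)) (pderiv p)"
        using order_divides[of "-(\<alpha> + \<beta>)" "m + n - 1" "pderiv p"] by (simp add: add.commute)
      moreover have "order (-(\<alpha> + \<beta>)) p = Suc (order (-(\<alpha> + \<beta>)) (pderiv p))"
        by (rule order_pderiv[OF pn0 root])
      ultimately have "Suc m + n - 1 \<le> order (-(\<alpha> + \<beta>)) p" using False by simp
      then show ?thesis using order_divides[of "-(\<alpha> + \<beta>)" "Suc m + n - 1" p] by (simp add: add.commute)
    qed
  qed
qed

lemma loc_suf:
  assumes "1 \<le> m" "1 \<le> n"
  shows "in_sum ([:\<alpha> + \<beta>, 1:] ^ (m + n - 1)) \<in> ideal_st ([:\<alpha>, 1:] ^ m) ([:\<beta>, 1:] ^ n)"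
proof -
  define X where "X = in_s [:\<alpha>, 1:]"
  define Y where "Y = in_t [:\<beta>, 1:]"
  define N where "N = m + n - 1"
  have "in_sum ([:\<alpha> + \<beta>, 1:] ^ N) = (X + Y) ^ N"
    by (simp add: in_sum_lin X_def Y_def)
  also have "\<dots> = (\<Sum>k\<le>N. of_nat (N choose k) * X ^ k * Y ^ (N - k))"
    by (rule binomial_ring)
  also have "\<dots> \<in> ideal_st ([:\<alpha>, 1:] ^ m) ([:\<beta>, 1:] ^ n)"
  proof (rule ideal_sum)
    fix k assume k: "k \<in> {..N}"
    show "of_nat (N choose k) * X ^ k * Y ^ (N - k) \<in> ideal_st ([:\<alpha>, 1:] ^ m) ([:\<beta>, 1:] ^ n)"
    proof (cases "m \<le> k")
      case True
      then have "X ^ k = X ^ (k - m) * X ^ m" by (simp flip: power_add)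
      then have "of_nat (N choose k) * X ^ k * Y ^ (N - k)
          = (of_nat (N choose k) * X ^ (k - m) * Y ^ (N - k)) * in_s ([:\<alpha>, 1:] ^ m)"
        by (simp add: X_def algebra_simps)
      then show ?thesis by (simp only: ideal_gen_s)
    next
      case False
      then have "n \<le> N - k" using k N_def by auto
      then have "N - k = (N - k - n) + n" by simp
      then have "Y ^ (N - k) = Y ^ (N - k - n) * Y ^ n" by (metis power_add)
      then have "of_nat (N choose k) * X ^ k * Y ^ (N - k)
          = (of_nat (N choose k) * X ^ k * Y ^ (N - k - n)) * in_t ([:\<beta>, 1:] ^ n)"
        by (simp add: Y_def algebra_simps)
      then show ?thesis by (simp only: ideal_gen_t)
    qed
  qed simp
  finally show ?thesis unfolding N_def .
qed

lemma no_roots_const: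
  fixes p :: "complex poly"
  assumes "\<And>x. poly p x \<noteq> 0"
  shows "\<exists>c. c \<noteq> 0 \<and> p = [:c:]"
proof -
  have "degree p = 0"
    using assms fundamental_theorem_of_algebra constant_degree by blast
  then have "p = [:coeff p 0:]" by (metis degree_0_id)
  moreover have "coeff p 0 \<noteq> 0" using assms[of 0] calculation by (metis poly_const_conv)
  ultimately show ?thesis by blast
qed

lemma mult_at_root_factor:
  fixes p :: "complex poly"
  assumes "poly p x \<noteq> 0"
  shows "mult_at (-x) ([:-x, 1:] ^ n * p) = n"
proof -
  have "p \<noteq> 0" using assms by auto
  then show ?thesis
    unfolding mult_at_def using assms
    by (simp add: order_mult order_power_n_n order_0I)
qed

lemma mult_at_other_factor:
  fixes p :: "complex poly"
  assumes "p \<noteq> 0" "\<alpha> \<noteq> -x"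
  shows "mult_at \<alpha> ([:-x, 1:] ^ n * p) = mult_at \<alpha> p"
proof -
  have "poly ([:-x, 1:] ^ n) (-\<alpha>) \<noteq> 0" using assms(2) by (auto simp: poly_power)
  then have "order (-\<alpha>) ([:-x, 1:] ^ n) = 0" by (rule order_0I)
  then show ?thesis
    unfolding mult_at_def using assms(1) by (simp add: order_mult)
qed

lemma coprime_root_factor:
  fixes p :: "complex poly"
  assumes "poly p x \<noteq> 0"
  shows "coprime ([:-x, 1:] ^ n) p"
proof -
  have "\<not> [:-x, 1:] dvd p" using assms by (simp add: poly_eq_0_iff_dvd)
  then have "coprime [:-x, 1:] p"
    by (intro prime_elem_imp_coprime prime_elem_linear_field_poly) simp_all
  then show ?thesis by (simp add: coprime_power_left_iff)
qed

lemma glob_s: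
  "\<forall>F. a \<noteq> 0 \<longrightarrow> (\<forall>\<alpha>\<in>Rset a. F \<in> ideal_st ([:\<alpha>, 1:] ^ mult_at \<alpha> a) b) \<longrightarrow> F \<in> ideal_st a b"
proof (induction a rule: poly_root_order_induct)
  case 0
  then show ?case by simp
next
  case (no_roots p)
  then obtain c where "c \<noteq> 0" "p = [:c:]" using no_roots_const by blast
  then show ?case by (auto intro: ideal_unit_s)
next
  case (root p x n)
  show ?case
  proof (intro allI impI)
    fix F
    assume nz: "[:- x, 1:] ^ n * p \<noteq> 0"
      and H: "\<forall>\<alpha>\<in>Rset ([:- x, 1:] ^ n * p). F \<in> ideal_st ([:\<alpha>, 1:] ^ mult_at \<alpha> ([:- x, 1:] ^ n * p)) b"
    have pnz: "p \<noteq> 0" using nz by auto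
    have "-x \<in> Rset ([:- x, 1:] ^ n * p)" using root(1) by (simp add: Rset_def)
    with H have 1: "F \<in> ideal_st ([:- x, 1:] ^ n) b"
      using mult_at_root_factor[OF root(2), of n] by force
    have "F \<in> ideal_st p b"
    proof -
      have "\<forall>\<alpha>\<in>Rset p. F \<in> ideal_st ([:\<alpha>, 1:] ^ mult_at \<alpha> p) b"
      proof
        fix \<alpha> assume a: "\<alpha> \<in> Rset p"
        then have "\<alpha> \<noteq> -x" using root(2) by (auto simp: Rset_def)
        moreover have "\<alpha> \<in> Rset ([:- x, 1:] ^ n * p)" using a by (simp add: Rset_def)
        ultimately show "F \<in> ideal_st ([:\<alpha>, 1:] ^ mult_at \<alpha> p) b"
          using H mult_at_other_factor[OF pnz, of \<alpha> x n] by auto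
      qed
      then show ?thesis using root(3) pnz by blast
    qed
    then show "F \<in> ideal_st ([:- x, 1:] ^ n * p) b"
      by (intro comb_s[OF coprime_root_factor[OF root(2)] 1])
  qed
qed

lemma glob_t:
  "\<forall>F. b \<noteq> 0 \<longrightarrow> (\<forall>\<beta>\<in>Rset b. F \<in> ideal_st a ([:\<beta>, 1:] ^ mult_at \<beta> b)) \<longrightarrow> F \<in> ideal_st a b"
proof (induction b rule: poly_root_order_induct)
  case 0
  then show ?case by simp
next
  case (no_roots p)
  then obtain c where "c \<noteq> 0" "p = [:c:]" using no_roots_const by blast
  then show ?case by (auto intro: ideal_unit_t)
next
  case (root p x n)
  show ?case
  proof (intro allI impI)
    fix F
    assume nz: "[:- x, 1:] ^ n * p \<noteq> 0"
      and H: "\<forall>\<beta>\<in>Rset ([:- x, 1:] ^ n * p). F \<in> ideal_st a ([:\<beta>, 1:] ^ mult_at \<beta> ([:- x, 1:] ^ n * p))"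
    have pnz: "p \<noteq> 0" using nz by auto
    have "-x \<in> Rset ([:- x, 1:] ^ n * p)" using root(1) by (simp add: Rset_def)
    with H have 1: "F \<in> ideal_st a ([:- x, 1:] ^ n)"
      using mult_at_root_factor[OF root(2), of n] by force
    have "F \<in> ideal_st a p"
    proof -
      have "\<forall>\<beta>\<in>Rset p. F \<in> ideal_st a ([:\<beta>, 1:] ^ mult_at \<beta> p)"
      proof
        fix \<beta> assume a: "\<beta> \<in> Rset p"
        then have "\<beta> \<noteq> -x" using root(2) by (auto simp: Rset_def)
        moreover have "\<beta> \<in> Rset ([:- x, 1:] ^ n * p)" using a by (simp add: Rset_def)
        ultimately show "F \<in> ideal_st a ([:\<beta>, 1:] ^ mult_at \<beta> p)"
          using H mult_at_other_factor[OF pnz, of \<beta> x n] by auto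
      qed
      then show ?thesis using root(3) pnz by blast
    qed
    then show "F \<in> ideal_st a ([:- x, 1:] ^ n * p)"
      by (intro comb_t[OF coprime_root_factor[OF root(2)] 1])
  qed
qed

lemma mult_pos: "a \<noteq> 0 \<Longrightarrow> \<alpha> \<in> Rset a \<Longrightarrow> 1 \<le> mult_at \<alpha> a"
  by (simp add: Rset_def mult_at_def order_gt_0_iff Suc_le_eq)

lemma lin_pow_dvd: "[:\<alpha>, 1:] ^ mult_at \<alpha> a dvd a"
  using order_1[of "-\<alpha>" a] by (simp add: mult_at_def)

lemma suff:
  assumes "a \<noteq> 0" "b \<noteq> 0"
    and H: "\<forall>\<alpha>\<in>Rset a. \<forall>\<beta>\<in>Rset b. [:\<alpha> + \<beta>, 1:] ^ (mult_at \<alpha> a + mult_at \<beta> b - 1) dvd P"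
  shows "in_sum P \<in> ideal_st a b"
proof -
  have "\<forall>\<alpha>\<in>Rset a. in_sum P \<in> ideal_st ([:\<alpha>, 1:] ^ mult_at \<alpha> a) b"
  proof
    fix \<alpha> assume a: "\<alpha> \<in> Rset a"
    have "\<forall>\<beta>\<in>Rset b. in_sum P \<in> ideal_st ([:\<alpha>, 1:] ^ mult_at \<alpha> a) ([:\<beta>, 1:] ^ mult_at \<beta> b)"
    proof
      fix \<beta> assume b: "\<beta> \<in> Rset b"
      obtain k where k: "P = [:\<alpha> + \<beta>, 1:] ^ (mult_at \<alpha> a + mult_at \<beta> b - 1) * k"
        using H a b by blast
      have "in_sum P = in_sum k * in_sum ([:\<alpha> + \<beta>, 1:] ^ (mult_at \<alpha> a + mult_at \<beta> b - 1))"
        unfolding k by (simp only: in_sum_mult mult.commute)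
      then show "in_sum P \<in> ideal_st ([:\<alpha>, 1:] ^ mult_at \<alpha> a) ([:\<beta>, 1:] ^ mult_at \<beta> b)"
        using ideal_mult[OF loc_suf[OF mult_pos[OF assms(1) a] mult_pos[OF assms(2) b]]]
        by simp
    qed
    then show "in_sum P \<in> ideal_st ([:\<alpha>, 1:] ^ mult_at \<alpha> a) b"
      using glob_t assms(2) by blast
  qed
  then show ?thesis using glob_s assms(1) by blast
qed

lemma nec:
  assumes "a \<noteq> 0" "b \<noteq> 0" "in_sum p \<in> ideal_st a b" "\<alpha> \<in> Rset a" "\<beta> \<in> Rset b"
  shows "[:\<alpha> + \<beta>, 1:] ^ (mult_at \<alpha> a + mult_at \<beta> b - 1) dvd p"
proof -
  have "in_sum p \<in> ideal_st ([:\<alpha>, 1:] ^ mult_at \<alpha> a) ([:\<beta>, 1:] ^ mult_at \<beta> b)"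
    by (rule ideal_mono[OF lin_pow_dvd lin_pow_dvd assms(3)])
  then show ?thesis
    by (rule loc_nec[OF mult_pos[OF assms(1,4)] mult_pos[OF assms(2,5)]])
qed

lemma finite_Rset: "a \<noteq> 0 \<Longrightarrow> finite (Rset a)"
proof -
  assume "a \<noteq> 0"
  then have "finite (uminus ` {x. poly a x = 0})" by (simp add: poly_roots_finite)
  moreover have "Rset a \<subseteq> uminus ` {x. poly a x = 0}"
    by (auto simp: Rset_def image_iff intro!: exI[of _ "- _"])
  ultimately show ?thesis by (rule finite_subset[rotated])
qed

lemma finite_pairs:
  assumes "finite A" "finite B"
  shows "finite {f \<alpha> \<beta> | \<alpha> \<beta>. \<alpha> \<in> A \<and> \<beta> \<in> B \<and> Q \<alpha> \<beta>}"
proof (rule finite_subset)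
  show "{f \<alpha> \<beta> | \<alpha> \<beta>. \<alpha> \<in> A \<and> \<beta> \<in> B \<and> Q \<alpha> \<beta>} \<subseteq> (\<lambda>(x, y). f x y) ` (A \<times> B)" by auto
  show "finite ((\<lambda>(x, y). f x y) ` (A \<times> B))" using assms by simp
qed

lemma coprime_lin_pow:
  fixes x y :: complex
  assumes "x \<noteq> y"
  shows "coprime ([:x, 1:] ^ i) ([:y, 1:] ^ j)"
proof -
  have "\<not> [:-(-x), 1:] dvd [:y, 1:]"
    unfolding poly_eq_0_iff_dvd[symmetric] using assms by simp
  then have "coprime [:x, 1:] [:y, 1:]"
    by (intro prime_elem_imp_coprime prime_elem_linear_field_poly) simp_all
  then show ?thesis by (simp add: coprime_power_left_iff coprime_power_right_iff)
qed

lemma prod_lin_dvd: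
  fixes p :: "complex poly"
  shows "finite A \<Longrightarrow> (\<And>\<gamma>. \<gamma> \<in> A \<Longrightarrow> [:\<gamma>, 1:] ^ e \<gamma> dvd p) \<Longrightarrow> (\<Prod>\<gamma>\<in>A. [:\<gamma>, 1:] ^ e \<gamma>) dvd p"
proof (induction A rule: finite_induct)
  case empty
  then show ?case by simp
next
  case (insert x F)
  have "coprime ([:x, 1:] ^ e x) (\<Prod>\<gamma>\<in>F. [:\<gamma>, 1:] ^ e \<gamma>)"
    using insert(2) by (intro prod_coprime_right coprime_lin_pow) auto
  then show ?case using insert by (simp add: divides_mult)
qed

lemma star_dvd_iff:
  assumes "a \<noteq> 0" "b \<noteq> 0"
  shows "star a b dvd p \<longleftrightarrow>
    (\<forall>\<alpha>\<in>Rset a. \<forall>\<beta>\<in>Rset b. [:\<alpha> + \<beta>, 1:] ^ (mult_at \<alpha> a + mult_at \<beta> b - 1) dvd p)"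
proof -
  define G where "G = {\<alpha> + \<beta> | \<alpha> \<beta>. \<alpha> \<in> Rset a \<and> \<beta> \<in> Rset b}"
  define S where "S = (\<lambda>\<gamma>. {mult_at \<alpha> a + mult_at \<beta> b - 1 | \<alpha> \<beta>.
                          \<alpha> \<in> Rset a \<and> \<beta> \<in> Rset b \<and> \<alpha> + \<beta> = \<gamma>})"
  have st: "star a b = (\<Prod>\<gamma>\<in>G. [:\<gamma>, 1:] ^ Max (S \<gamma>))"
    unfolding star_def G_def S_def ..
  have fR: "finite (Rset a)" "finite (Rset b)" using finite_Rset assms by auto
  have fG: "finite G" unfolding G_def using finite_pairs[OF fR, of "\<lambda>x y. x + y" "\<lambda>_ _. True"] by simp
  have fS: "finite (S \<gamma>)" for \<gamma>
    unfolding S_def using finite_pairs[OF fR, of "\<lambda>x y. mult_at x a + mult_at y b - 1" "\<lambda>x y. x + y = \<gamma>"] by simp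
  show ?thesis
  proof
    assume d: "star a b dvd p"
    show "\<forall>\<alpha>\<in>Rset a. \<forall>\<beta>\<in>Rset b. [:\<alpha> + \<beta>, 1:] ^ (mult_at \<alpha> a + mult_at \<beta> b - 1) dvd p"
    proof (intro ballI)
      fix \<alpha> \<beta> assume r: "\<alpha> \<in> Rset a" "\<beta> \<in> Rset b"
      have inG: "\<alpha> + \<beta> \<in> G" using r unfolding G_def by blast
      have "mult_at \<alpha> a + mult_at \<beta> b - 1 \<in> S (\<alpha> + \<beta>)" using r unfolding S_def by blast
      then have "mult_at \<alpha> a + mult_at \<beta> b - 1 \<le> Max (S (\<alpha> + \<beta>))" using fS by simp
      then have "[:\<alpha> + \<beta>, 1:] ^ (mult_at \<alpha> a + mult_at \<beta> b - 1) dvd [:\<alpha> + \<beta>, 1:] ^ Max (S (\<alpha> + \<beta>))"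
        by (rule le_imp_power_dvd)
      also have "\<dots> dvd star a b" unfolding st by (rule dvd_prodI[OF fG inG])
      finally show "[:\<alpha> + \<beta>, 1:] ^ (mult_at \<alpha> a + mult_at \<beta> b - 1) dvd p" using d by (rule dvd_trans)
    qed
  next
    assume H: "\<forall>\<alpha>\<in>Rset a. \<forall>\<beta>\<in>Rset b. [:\<alpha> + \<beta>, 1:] ^ (mult_at \<alpha> a + mult_at \<beta> b - 1) dvd p"
    have "[:\<gamma>, 1:] ^ Max (S \<gamma>) dvd p" if g: "\<gamma> \<in> G" for \<gamma>
    proof -
      have "S \<gamma> \<noteq> {}" using g unfolding G_def S_def by blast
      then have "Max (S \<gamma>) \<in> S \<gamma>" using fS by (rule Max_in[rotated])
      then obtain \<alpha> \<beta> where "\<alpha> \<in> Rset a" "\<beta> \<in> Rset b" "\<alpha> + \<beta> = \<gamma>"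
          "Max (S \<gamma>) = mult_at \<alpha> a + mult_at \<beta> b - 1"
        unfolding S_def by blast
      then show ?thesis using H by metis
    qed
    then show "star a b dvd p" unfolding st by (intro prod_lin_dvd fG)
  qed
qed

lemma key:
  assumes "a \<noteq> 0" "b \<noteq> 0"
  shows "in_sum p \<in> ideal_st a b \<longleftrightarrow> star a b dvd p"
proof
  assume m: "in_sum p \<in> ideal_st a b"
  show "star a b dvd p"
    unfolding star_dvd_iff[OF assms] by (intro ballI nec[OF assms m])
next
  assume "star a b dvd p"
  then show "in_sum p \<in> ideal_st a b"
    unfolding star_dvd_iff[OF assms] by (rule suff[OF assms])
qed

lemma lead_star: "lead_coeff (star a b) = 1"
  unfolding star_def by (simp add: lead_coeff_prod lead_coeff_power)

lemma in_princ_dvd: "in_sum q \<in> princ_sum r \<Longrightarrow> r dvd q"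
proof -
  assume "in_sum q \<in> princ_sum r"
  then obtain k where "in_sum q = in_sum k * in_sum r" unfolding princ_sum_def sum_ring_def by auto
  then have "in_sum q = in_sum (k * r)" by simp
  then have "q = k * r" by (rule in_sum_inj)
  then show "r dvd q" by simp
qed

lemma self_princ: "in_sum q \<in> princ_sum q"
proof -
  have "in_sum q = in_sum 1 * in_sum q" by simp
  then show ?thesis unfolding princ_sum_def sum_ring_def by blast
qed

lemma monic_dvd_antisym:
  fixes c s :: "complex poly"
  assumes "lead_coeff c = 1" "lead_coeff s = 1" "c dvd s" "s dvd c"
  shows "c = s"
proof -
  obtain k where k: "s = c * k" using assms(3) by blast
  obtain l where l: "c = s * l" using assms(4) by blast
  have snz: "s \<noteq> 0" using assms(2) by auto
  have "s * (l * k) = s * 1" by (simp only: mult.assoc[symmetric] l[symmetric] k[symmetric] mult_1_right)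
  then have "l * k = 1" using snz mult_left_cancel by blast
  then have "k \<noteq> 0" "l \<noteq> 0" by auto
  then have "degree k = 0" using degree_mult_eq[of l k] \<open>l * k = 1\<close> by simp
  then have kk: "k = [:coeff k 0:]" by (metis degree_0_id)
  have "lead_coeff s = lead_coeff c * lead_coeff k" using k by (simp add: lead_coeff_mult)
  then have "lead_coeff k = 1" using assms(1,2) by simp
  then have "coeff k 0 = 1" using \<open>degree k = 0\<close> by simp
  then have "k = 1" using kk by (simp add: one_pCons)
  then show ?thesis using k by simp
qed

theorem proposition2p1:
  fixes a b :: "complex poly"
  assumes "a \<noteq> 0" and "b \<noteq> 0"
  shows "is_bullet a b (star a b) \<and> (\<forall>c. is_bullet a b c \<longrightarrow> c = star a b)"
proof -
  have eq: "ideal_st a b \<inter> sum_ring = princ_sum (star a b)"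
  proof (intro equalityI subsetI)
    fix x assume "x \<in> ideal_st a b \<inter> sum_ring"
    then obtain p where x: "x = in_sum p" and m: "in_sum p \<in> ideal_st a b"
      unfolding sum_ring_def by auto
    then have "star a b dvd p" using key[OF assms] by simp
    then obtain k where "p = star a b * k" by blast
    then have "x = in_sum k * in_sum (star a b)" using x by (simp add: mult.commute)
    then show "x \<in> princ_sum (star a b)" unfolding princ_sum_def sum_ring_def by blast
  next
    fix x assume "x \<in> princ_sum (star a b)"
    then obtain k where x: "x = in_sum k * in_sum (star a b)"
      unfolding princ_sum_def sum_ring_def by auto
    then have "x = in_sum (k * star a b)" by simp
    moreover have "in_sum (k * star a b) \<in> ideal_st a b"
      using key[OF assms, of "k * star a b"] by (simp del: in_sum_mult)
    ultimately show "x \<in> ideal_st a b \<inter> sum_ring" unfolding sum_ring_def by (simp del: in_sum_mult)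
  qed
  have b1: "is_bullet a b (star a b)"
    unfolding is_bullet_def using eq lead_star by simp
  have "c = star a b" if c: "is_bullet a b c" for c
  proof -
    have lcc: "lead_coeff c = 1" and pc: "princ_sum c = princ_sum (star a b)"
      using c eq unfolding is_bullet_def by auto
    have "star a b dvd c" using in_princ_dvd self_princ[of c] pc by simp
    moreover have "c dvd star a b" using in_princ_dvd self_princ[of "star a b"] pc by metis
    ultimately show ?thesis using monic_dvd_antisym lcc lead_star by blast
  qed
  then show ?thesis using b1 by blast
qed

end
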